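(* Let $\lambda(z)=\sum_{i\ge 2}\lambda_i z^{i-1}$ be a polynomial with $\lambda_i\ge 0$ and $\sum_i\lambda_i=1$, and let $j=1/\int_0^1\lambda(z)\,dz$. Let $\bar\alpha_j$ be the largest $\alpha\ge 0$ such that $\lambda\!\left(1-e^{-\alpha j x}\right)\le x$ for all $x\in(0,1]$. For an integer $k\ge 2$ and $\alpha>0$ with $\alpha j\le k-1$, set $\delta=\alpha j/(k-1)$ and define the density-evolution sequence $x_0=1$, $x_{i+1}=\delta\,\lambda\!\left(1-(1-x_i)^{k-1}\right)$ for $i\ge 0$. (a) If $\alpha>\bar\alpha_j$, then for every integer $k\ge 2$ with $\alpha j\le k-1$, the sequence $(x_i)$ does not converge to $0$. (b) If $0<\alpha<\bar\alpha_j$, then there exists $K<\infty$ such that for all integers $k\ge K$ the sequence $(x_i)$ converges to $0$.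
   Context: This is the density-evolution (DE) recursion for iterative erasure decoding on the binary erasure channel with erasure probability $\delta$ of a check-regular LDPC ensemble with variable-node edge degree distribution $\lambda$ and all check nodes of degree $k$; convergence of $x_i$ to $0$ corresponds to decoding success with high probability as the block length tends to infinity, and non-convergence to failure. *)

theory Defs
  imports "HOL-Analysis.Analysis"
begin

definition lam_poly :: "(nat \<Rightarrow> real) \<Rightarrow> nat \<Rightarrow> real \<Rightarrow> real" where
  "lam_poly lam D z = (\<Sum>i\<in>{2..D}. lam i * z ^ (i - 1))"

definition degree_dist :: "(nat \<Rightarrow> real) \<Rightarrow> nat \<Rightarrow> bool" where
  "degree_dist lam D \<longleftrightarrow> (\<forall>i. 0 \<le> lam i) \<and> lam 0 = 0 \<and> lam 1 = 0 \<and>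
     (\<forall>i>D. lam i = 0) \<and> (\<Sum>i\<in>{2..D}. lam i) = 1"

definition jval :: "(nat \<Rightarrow> real) \<Rightarrow> nat \<Rightarrow> real" where
  "jval lam D = 1 / integral {0..1} (lam_poly lam D)"

definition alpha_bar :: "(nat \<Rightarrow> real) \<Rightarrow> nat \<Rightarrow> real" where
  "alpha_bar lam D = (GREATEST a. 0 \<le> a \<and>
     (\<forall>x\<in>{0<..1}. lam_poly lam D (1 - exp (- a * jval lam D * x)) \<le> x))"

primrec DE :: "(nat \<Rightarrow> real) \<Rightarrow> nat \<Rightarrow> real \<Rightarrow> nat \<Rightarrow> nat \<Rightarrow> real" where
  "DE lam D delta k 0 = 1"
| "DE lam D delta k (Suc i) = delta * lam_poly lam D (1 - (1 - DE lam D delta k i) ^ (k - 1))"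

end

theory Submission
  imports Defs
begin


lemma dd_pos:
  assumes "degree_dist lam D"
  obtains i0 where "i0 \<in> {2..D}" "lam i0 > 0"
proof -
  have s: "(\<Sum>i\<in>{2..D}. lam i) = 1" and nn: "\<forall>i. 0 \<le> lam i" using assms unfolding degree_dist_def by auto
  show ?thesis
  proof (rule ccontr)
    assume "\<not> ?thesis"
    with that nn have "\<forall>i\<in>{2..D}. lam i = 0" by (metis order_less_le)
    then have "(\<Sum>i\<in>{2..D}. lam i) = 0" by simp
    with s show False by simp
  qed
qed

lemma P_nonneg: assumes "degree_dist lam D" "0 \<le> x" shows "0 \<le> lam_poly lam D x"
  using assms unfolding lam_poly_def degree_dist_def by (auto intro!: sum_nonneg)

lemma P_mono: assumes "degree_dist lam D" "0 \<le> x" "x \<le> y" shows "lam_poly lam D x \<le> lam_poly lam D y"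
  using assms unfolding lam_poly_def degree_dist_def
  by (auto intro!: sum_mono mult_left_mono power_mono)

lemma P_strict: assumes "degree_dist lam D" "0 \<le> x" "x < y" shows "lam_poly lam D x < lam_poly lam D y"
proof -
  obtain i0 where i0: "i0 \<in> {2..D}" "lam i0 > 0" using dd_pos[OF assms(1)] by blast
  have nn: "\<forall>i. 0 \<le> lam i" using assms unfolding degree_dist_def by auto
  show ?thesis unfolding lam_poly_def
  proof (rule sum_strict_mono_ex1)
    show "finite {2..D}" by simp
    show "\<forall>i\<in>{2..D}. lam i * x ^ (i - 1) \<le> lam i * y ^ (i - 1)"
      using nn assms by (auto intro!: mult_left_mono power_mono)
    have "x ^ (i0 - 1) < y ^ (i0 - 1)" using i0 assms by (intro power_strict_mono) auto
    then show "\<exists>i\<in>{2..D}. lam i * x ^ (i - 1) < lam i * y ^ (i - 1)"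
      using i0 by (intro bexI[of _ i0]) auto
  qed
qed

lemma P_0: "lam_poly lam D 0 = 0" unfolding lam_poly_def by (auto intro!: sum.neutral)
lemma P_1: assumes "degree_dist lam D" shows "lam_poly lam D 1 = 1"
  using assms unfolding lam_poly_def degree_dist_def by auto

lemma P_cont: "continuous_on UNIV (lam_poly lam D)"
  unfolding lam_poly_def by (intro continuous_intros)

lemma P_isCont: "isCont (lam_poly lam D) x"
  using P_cont continuous_on_eq_continuous_at by blast

lemma j_pos: assumes "degree_dist lam D" shows "jval lam D > 0"
proof -
  obtain i0 where i0: "i0 \<in> {2..D}" "lam i0 > 0" using dd_pos[OF assms(1)] by blast
  have nn: "\<forall>i. 0 \<le> lam i" using assms unfolding degree_dist_def by auto
  let ?G = "\<lambda>z::real. \<Sum>i\<in>{2..D}. lam i * z ^ i / real i"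
  have "(lam_poly lam D has_integral (?G 1 - ?G 0)) {0..1}"
  proof (rule fundamental_theorem_of_calculus)
    show "0 \<le> (1::real)" by simp
    fix x :: real assume "x \<in> {0..1}"
    have "(?G has_real_derivative (\<Sum>i\<in>{2..D}. lam i * (real i * x ^ (i - 1)) / real i)) (at x within {0..1})"
      by (intro derivative_eq_intros) auto
    moreover have "(\<Sum>i\<in>{2..D}. lam i * (real i * x ^ (i - 1)) / real i) = lam_poly lam D x"
      unfolding lam_poly_def by (intro sum.cong) auto
    ultimately show "(?G has_vector_derivative lam_poly lam D x) (at x within {0..1})"
      by (simp add: has_real_derivative_iff_has_vector_derivative)
  qed
  then have I: "integral {0..1} (lam_poly lam D) = ?G 1 - ?G 0" by blast
  have "?G 0 = 0" by (auto intro!: sum.neutral)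
  moreover have "?G 1 > 0"
    using i0 nn by (intro sum_pos2[of _ i0]) auto
  ultimately show ?thesis using I unfolding jval_def by simp
qed



definition Sset :: "(nat \<Rightarrow> real) \<Rightarrow> nat \<Rightarrow> real set" where
  "Sset lam D = {a. 0 \<le> a \<and> (\<forall>x\<in>{0<..1}. lam_poly lam D (1 - exp (- a * jval lam D * x)) \<le> x)}"

lemma S_bdd: assumes "degree_dist lam D" shows "bdd_above (Sset lam D)"
proof -
  define j where "j = jval lam D"
  have j: "j > 0" using j_pos[OF assms] j_def by simp

  have t: "((\<lambda>a::real. exp (- a * j * (1/2))) \<longlongrightarrow> 0) at_top"
  proof -
    have "filterlim (\<lambda>a::real. - a * j * (1/2)) at_bot at_top"
      using j by real_asymp
    then show ?thesis by (rule filterlim_compose[OF exp_at_bot])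
  qed
  have "((\<lambda>a. lam_poly lam D (1 - exp (- a * j * (1/2)))) \<longlongrightarrow> lam_poly lam D (1 - 0)) at_top"
    by (intro isCont_tendsto_compose[OF P_isCont] tendsto_intros t)
  then have "((\<lambda>a. lam_poly lam D (1 - exp (- a * j * (1/2)))) \<longlongrightarrow> 1) at_top"
    using P_1[OF assms] by simp
  then have "eventually (\<lambda>a. lam_poly lam D (1 - exp (- a * j * (1/2))) > 1/2) at_top"
    by (rule order_tendstoD) simp
  then obtain B where B: "\<And>a. a \<ge> B \<Longrightarrow> lam_poly lam D (1 - exp (- a * j * (1/2))) > 1/2"
    by (auto simp: eventually_at_top_linorder)
  show ?thesis unfolding bdd_above_def
  proof (intro exI ballI)
    fix a assume "a \<in> Sset lam D"
    then have "lam_poly lam D (1 - exp (- a * j * (1/2))) \<le> 1/2"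
      unfolding Sset_def j_def by (auto dest: bspec[of _ _ "1/2"])
    then show "a \<le> B" using B[of a] by (meson linorder_not_less nle_le)
  qed
qed

lemma S_closed: "closed (Sset lam D)"
proof -
  have "Sset lam D = {a. 0 \<le> a} \<inter> (\<Inter>x\<in>{0<..1}. {a. lam_poly lam D (1 - exp (- a * jval lam D * x)) \<le> x})"
    unfolding Sset_def by auto
  moreover have "closed {a::real. 0 \<le> a}"
    by (rule closed_Collect_le) (intro continuous_intros)+
  moreover have "closed {a. lam_poly lam D (1 - exp (- a * jval lam D * x)) \<le> x}" for x
    by (rule closed_Collect_le) (unfold lam_poly_def, intro continuous_intros, rule continuous_on_const)+
  ultimately show ?thesis by (simp only:) (intro closed_Int closed_INT ballI)
qed

lemma S_0: "0 \<in> Sset lam D"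
  unfolding Sset_def by (auto simp: P_0)

lemma ab_in: assumes "degree_dist lam D" shows "alpha_bar lam D \<in> Sset lam D"
  and "\<And>a. a \<in> Sset lam D \<Longrightarrow> a \<le> alpha_bar lam D"
proof -
  have Sup: "Sup (Sset lam D) \<in> Sset lam D"
    using closed_contains_Sup[OF _ S_bdd[OF assms] S_closed] S_0 by blast
  have eq: "alpha_bar lam D = Sup (Sset lam D)"
    unfolding alpha_bar_def
  proof (rule Greatest_equality)
    show "0 \<le> Sup (Sset lam D) \<and> (\<forall>x\<in>{0<..1}. lam_poly lam D (1 - exp (- Sup (Sset lam D) * jval lam D * x)) \<le> x)"
      using Sup unfolding Sset_def by blast
    fix y assume "0 \<le> y \<and> (\<forall>x\<in>{0<..1}. lam_poly lam D (1 - exp (- y * jval lam D * x)) \<le> x)"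
    then have "y \<in> Sset lam D" unfolding Sset_def by blast
    then show "y \<le> Sup (Sset lam D)" using cSup_upper S_bdd[OF assms] by blast
  qed
  show "alpha_bar lam D \<in> Sset lam D" using Sup eq by simp
  show "\<And>a. a \<in> Sset lam D \<Longrightarrow> a \<le> alpha_bar lam D"
    using eq cSup_upper S_bdd[OF assms] by simp
qed



lemma F_mono: assumes "degree_dist lam D" "0 \<le> x" "x \<le> y" "y \<le> 1" "0 \<le> (d::real)"
  shows "d * lam_poly lam D (1 - (1 - x) ^ m) \<le> d * lam_poly lam D (1 - (1 - y) ^ m)"
proof -
  have "(1 - y) ^ m \<le> (1 - x) ^ m" using assms by (intro power_mono) auto
  moreover have "(1 - x) ^ m \<le> 1" using assms by (intro power_le_one) auto
  ultimately show ?thesis using assms by (intro mult_left_mono P_mono) auto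
qed

lemma F_range: assumes "degree_dist lam D" "0 \<le> x" "x \<le> 1" "0 \<le> (d::real)" "d \<le> 1"
  shows "0 \<le> d * lam_poly lam D (1 - (1 - x) ^ m)" "d * lam_poly lam D (1 - (1 - x) ^ m) \<le> 1"
proof -
  have a: "(1 - x) ^ m \<le> 1" "0 \<le> (1 - x) ^ m" using assms by (auto intro: power_le_one)
  have "0 \<le> lam_poly lam D (1 - (1 - x) ^ m)" using a assms by (intro P_nonneg) auto
  then show "0 \<le> d * lam_poly lam D (1 - (1 - x) ^ m)" using assms by simp
  have "lam_poly lam D (1 - (1 - x) ^ m) \<le> lam_poly lam D 1" using a assms by (intro P_mono) auto
  then have b: "lam_poly lam D (1 - (1 - x) ^ m) \<le> 1" using P_1[OF assms(1)] by simp
  show "d * lam_poly lam D (1 - (1 - x) ^ m) \<le> 1"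
    using mult_mono[OF assms(5) b] assms \<open>0 \<le> lam_poly lam D (1 - (1 - x) ^ m)\<close> by simp
qed

lemma DE_props: assumes "degree_dist lam D" "0 \<le> d" "d \<le> 1"
  shows "0 \<le> DE lam D d k i \<and> DE lam D d k i \<le> 1 \<and> DE lam D d k (Suc i) \<le> DE lam D d k i"
proof (induction i)
  case 0
  show ?case using F_range[OF assms(1) _ _ assms(2,3), of 1 "k-1"] by simp
next
  case (Suc i)
  then show ?case
    using F_range[OF assms(1) _ _ assms(2,3), of "DE lam D d k i" "k-1"]
      F_mono[OF assms(1) _ _ _ assms(2), of "DE lam D d k (Suc i)" "DE lam D d k i" "k-1"]
    by (auto simp del: DE.simps simp: DE.simps(2)[of _ _ _ _ "Suc i"] DE.simps(2)[of _ _ _ _ i])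
qed

lemma DE_lower: assumes "degree_dist lam D" "0 \<le> d" "d \<le> 1" "0 \<le> y" "y \<le> 1"
  "y \<le> d * lam_poly lam D (1 - (1 - y) ^ (k - 1))"
  shows "y \<le> DE lam D d k i"
proof (induction i)
  case 0 then show ?case using assms by simp
next
  case (Suc i)
  have "DE lam D d k i \<le> 1" using DE_props[OF assms(1-3)] by blast
  then show ?case using Suc assms F_mono[OF assms(1) assms(4) Suc _ assms(2), of "k-1"] by simp
qed

lemma exp_pow_ineq: assumes "0 \<le> t" "t < (1::real)"
  shows "exp (- (real n * t / (1 - t))) \<le> (1 - t) ^ n"
proof -
  have "ln (1 / (1 - t)) \<le> 1 / (1 - t) - 1" using assms by (intro ln_le_minus_one) auto
  then have "- ln (1 - t) \<le> t / (1 - t)" using assms by (simp add: ln_div field_simps)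
  then have "- (real n * t / (1 - t)) \<le> real n * ln (1 - t)"
  proof -
    have "real n * (- ln (1 - t)) \<le> real n * (t / (1 - t))"
      using \<open>- ln (1 - t) \<le> t / (1 - t)\<close> by (intro mult_left_mono) auto
    then show ?thesis by (simp add: algebra_simps)
  qed
  then have "exp (- (real n * t / (1 - t))) \<le> exp (real n * ln (1 - t))" by simp
  also have "\<dots> = (1 - t) ^ n" using assms by (simp add: exp_of_nat_mult)
  finally show ?thesis .
qed

lemma partA: assumes dd: "degree_dist lam D" and al: "\<alpha> > alpha_bar lam D"
  and k: "2 \<le> k" "\<alpha> * jval lam D \<le> real k - 1"
  shows "\<not> (DE lam D (\<alpha> * jval lam D / (real k - 1)) k \<longlonglongrightarrow> 0)"
proof
  define j where "j = jval lam D"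
  define d where "d = \<alpha> * j / (real k - 1)"
  assume lim: "DE lam D (\<alpha> * jval lam D / (real k - 1)) k \<longlonglongrightarrow> 0"
  have j: "j > 0" using j_pos[OF dd] j_def by simp
  have ab0: "0 \<le> alpha_bar lam D" using ab_in(1)[OF dd] unfolding Sset_def by simp
  have a0: "\<alpha> > 0" using al ab0 by simp
  have k1: "real k - 1 > 0" using k by simp
  have d0: "d > 0" using a0 j k1 unfolding d_def by simp
  have d1: "d \<le> 1" using k(2) k1 unfolding d_def j_def by simp
  have dk: "real (k - 1) * d = \<alpha> * j" using k1 k unfolding d_def by (simp add: of_nat_diff)
  have "\<alpha> \<notin> Sset lam D" using ab_in(2)[OF dd, of \<alpha>] al by force
  then obtain x0 where x0: "x0 \<in> {0<..1}" "lam_poly lam D (1 - exp (- \<alpha> * j * x0)) > x0"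
    using a0 unfolding Sset_def j_def by force
  define y where "y = d * x0"
  have y0: "0 < y" "y \<le> 1" using d0 d1 x0 unfolding y_def by (auto intro: mult_le_one)
  have "(1 - y) ^ (k - 1) \<le> exp (- y) ^ (k - 1)"
    using y0 exp_ge_add_one_self[of "-y"] by (intro power_mono) auto
  also have "\<dots> = exp (real (k - 1) * (- y))" by (rule exp_of_nat_mult[symmetric])
  also have "\<dots> = exp (- \<alpha> * j * x0)" using dk unfolding y_def
    by (metis minus_mult_left mult.assoc mult_minus_right)
  finally have e: "(1 - y) ^ (k - 1) \<le> exp (- \<alpha> * j * x0)" .
  have "lam_poly lam D (1 - exp (- \<alpha> * j * x0)) \<le> lam_poly lam D (1 - (1 - y) ^ (k - 1))"
    using e a0 j x0 by (intro P_mono[OF dd]) auto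
  with x0 have "x0 < lam_poly lam D (1 - (1 - y) ^ (k - 1))" by simp
  then have "y \<le> d * lam_poly lam D (1 - (1 - y) ^ (k - 1))" unfolding y_def using d0 by simp
  then have low: "\<And>i. y \<le> DE lam D d k i"
    using DE_lower[OF dd _ d1] d0 y0 by simp
  have "y \<le> 0"
    by (rule LIMSEQ_le_const[OF lim[folded j_def, folded d_def]]) (use low in auto)
  with y0 show False by simp
qed


lemma conv0: assumes dd: "degree_dist lam D" and d0: "0 \<le> d" "d \<le> 1" and k: "2 \<le> k"
  and F: "\<And>x. 0 < x \<Longrightarrow> x \<le> d \<Longrightarrow> d * lam_poly lam D (1 - (1 - x) ^ (k - 1)) < x"
  shows "DE lam D d k \<longlonglongrightarrow> 0"
proof -
  let ?X = "DE lam D d k"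
  have pr: "\<And>i. 0 \<le> ?X i \<and> ?X i \<le> 1 \<and> ?X (Suc i) \<le> ?X i" using DE_props[OF dd d0] by blast
  have "decseq ?X" using pr by (intro decseq_SucI) blast
  moreover have "\<forall>i. 0 \<le> ?X i" using pr by blast
  ultimately obtain L where L: "?X \<longlonglongrightarrow> L" "\<forall>i. L \<le> ?X i"
    by (rule decseq_convergent)
  have L0: "0 \<le> L" using LIMSEQ_le_const[OF L(1), of 0] pr by blast
  have "k - 1 = Suc (k - 2)" using k by arith
  then obtain m where "k - 1 = Suc m" by blast
  then have "?X (Suc 0) = d" using P_1[OF dd] by simp
  then have Ld: "L \<le> d" using L(2) by (metis (no_types))
  have t1: "(\<lambda>i. ?X (Suc i)) \<longlonglongrightarrow> L" using L(1) by (rule LIMSEQ_Suc)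
  have t2: "(\<lambda>i. d * lam_poly lam D (1 - (1 - ?X i) ^ (k - 1))) \<longlonglongrightarrow> d * lam_poly lam D (1 - (1 - L) ^ (k - 1))"
    by (intro tendsto_mult_left isCont_tendsto_compose[OF P_isCont] tendsto_intros L(1))
  have t3: "(\<lambda>i. ?X (Suc i)) = (\<lambda>i. d * lam_poly lam D (1 - (1 - ?X i) ^ (k - 1)))" by simp
  have "L = d * lam_poly lam D (1 - (1 - L) ^ (k - 1))"
    using LIMSEQ_unique[OF t1[unfolded t3] t2] .
  then have "\<not> 0 < L" using F[of L] Ld by linarith
  then show ?thesis using L L0 by simp
qed


lemma partB: assumes dd: "degree_dist lam D" and al: "0 < \<alpha>" "\<alpha> < alpha_bar lam D"
  shows "\<exists>K::nat. \<forall>k\<ge>K. 2 \<le> k \<and> \<alpha> * jval lam D \<le> real k - 1 \<longrightarrow>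
               (DE lam D (\<alpha> * jval lam D / (real k - 1)) k \<longlonglongrightarrow> 0)"
proof -
  define j where "j = jval lam D"
  define ab where "ab = alpha_bar lam D"
  have j: "j > 0" using j_pos[OF dd] j_def by simp
  define \<beta> where "\<beta> = (\<alpha> + ab) / 2"
  have b: "\<alpha> < \<beta>" "\<beta> < ab" using al unfolding \<beta>_def ab_def by auto
  define c where "c = 1 - \<alpha> / \<beta>"
  have c: "0 < c" "c < 1" using b al unfolding c_def by (auto simp: field_simps)
  have abS: "\<And>x. x \<in> {0<..1} \<Longrightarrow> lam_poly lam D (1 - exp (- ab * j * x)) \<le> x"
    using ab_in(1)[OF dd] unfolding Sset_def ab_def j_def by blast
  show ?thesis
  proof (intro exI allI impI)
    fix k :: nat
    assume kK: "nat \<lceil>\<alpha> * j / c\<rceil> + 2 \<le> k" and hk: "2 \<le> k \<and> \<alpha> * jval lam D \<le> real k - 1"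
    define d where "d = \<alpha> * j / (real k - 1)"
    have k1: "real k - 1 > 0" using hk by simp
    have "\<alpha> * j / c \<le> real k - 1"
    proof -
      have "\<alpha> * j / c \<le> real (nat \<lceil>\<alpha> * j / c\<rceil>)" by linarith
      also have "\<dots> \<le> real k - 1" using kK by linarith
      finally show ?thesis .
    qed
    then have "\<alpha> * j \<le> c * (real k - 1)" using c by (simp add: divide_le_eq mult.commute)
    then have dc: "d \<le> c" unfolding d_def using k1 by (simp add: divide_le_eq mult.commute)
    have d0: "0 < d" using al j k1 unfolding d_def by simp
    have d1: "d \<le> 1" using hk k1 unfolding d_def j_def by simp
    have dk: "real (k - 1) * d = \<alpha> * j" using k1 hk unfolding d_def by (simp add: of_nat_diff)
    have F: "d * lam_poly lam D (1 - (1 - x) ^ (k - 1)) < x" if x: "0 < x" "x \<le> d" for x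
    proof -
      define u where "u = x / d"
      have u: "0 < u" "u \<le> 1" using x d0 unfolding u_def by auto
      have xu: "x = d * u" using d0 unfolding u_def by simp
      have x1: "x < 1" using x dc c by simp
      have e1: "exp (- (real (k - 1) * x / (1 - x))) \<le> (1 - x) ^ (k - 1)"
        using x x1 by (intro exp_pow_ineq) auto
      have ax: "\<alpha> / \<beta> \<le> 1 - x" using x dc unfolding c_def by simp
      have ab0: "0 < \<alpha> / \<beta>" using al b by simp
      have "real (k - 1) * x / (1 - x) \<le> real (k - 1) * x / (\<alpha> / \<beta>)"
        using ax ab0 x by (intro divide_left_mono mult_nonneg_nonneg mult_pos_pos) auto
      also have "\<dots> = \<beta> * j * u" using dk al b unfolding xu
        by (simp add: field_simps)
      finally have "real (k - 1) * x / (1 - x) \<le> \<beta> * j * u" .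
      then have "exp (- \<beta> * j * u) \<le> exp (- (real (k - 1) * x / (1 - x)))"
        by (subst exp_le_cancel_iff) linarith
      then have "exp (- \<beta> * j * u) \<le> (1 - x) ^ (k - 1)" using e1 by (rule order_trans)
      note eb = this
      have "lam_poly lam D (1 - (1 - x) ^ (k - 1)) \<le> lam_poly lam D (1 - exp (- \<beta> * j * u))"
      proof (rule P_mono[OF dd])
        have "(1 - x) ^ (k - 1) \<le> 1" using x x1 by (intro power_le_one) auto
        then show "0 \<le> 1 - (1 - x) ^ (k - 1)" by linarith
        show "1 - (1 - x) ^ (k - 1) \<le> 1 - exp (- \<beta> * j * u)"
          using eb by linarith
      qed
      also have "\<dots> < lam_poly lam D (1 - exp (- ab * j * u))"
      proof (rule P_strict[OF dd])
        have "0 \<le> \<beta> * j * u" using b al j u by simp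
        then show "0 \<le> 1 - exp (- \<beta> * j * u)" by simp
        have "\<beta> * j * u < ab * j * u" using b j u by simp
        then show "1 - exp (- \<beta> * j * u) < 1 - exp (- ab * j * u)" by simp
      qed
      also have "\<dots> \<le> u" using abS u by simp
      finally have "lam_poly lam D (1 - (1 - x) ^ (k - 1)) < u" .
      then show ?thesis using d0 xu by simp
    qed
    show "DE lam D (\<alpha> * jval lam D / (real k - 1)) k \<longlonglongrightarrow> 0"
      using conv0[OF dd _ d1 _ F] d0 hk unfolding d_def j_def by simp
  qed
qed


theorem theorem1:
  fixes lam :: "nat \<Rightarrow> real" and D :: nat
  assumes "degree_dist lam D"
  shows "(\<forall>\<alpha>::real. \<alpha> > alpha_bar lam D \<longrightarrow>
            (\<forall>k::nat. 2 \<le> k \<and> \<alpha> * jval lam D \<le> real k - 1 \<longrightarrow>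
               \<not> (DE lam D (\<alpha> * jval lam D / (real k - 1)) k \<longlonglongrightarrow> 0)))
       \<and> (\<forall>\<alpha>::real. 0 < \<alpha> \<and> \<alpha> < alpha_bar lam D \<longrightarrow>
            (\<exists>K::nat. \<forall>k\<ge>K. 2 \<le> k \<and> \<alpha> * jval lam D \<le> real k - 1 \<longrightarrow>
               (DE lam D (\<alpha> * jval lam D / (real k - 1)) k \<longlonglongrightarrow> 0)))"
  using partA[OF assms] partB[OF assms] by blast

end
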